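(* There is an algorithm that, given integers $p,q\ge1$, decides whether there exist antipalindromic numbers $A,B$ with $p/q=A/B$.
   Context: A positive integer $n$ is antipalindromic if its binary representation $w=w_1\cdots w_L$ (most significant digit first, no leading zeros) has even length $L$ and satisfies $w_i+w_{L+1-i}=1$ for all $i$. *)

theory Defs
  imports Complex_Main
begin

fun bin_digits :: "nat \<Rightarrow> bool list" where
  "bin_digits n = (if n = 0 then [] else bin_digits (n div 2) @ [odd n])"

definition antipalindromic :: "nat \<Rightarrow> bool" where
  "antipalindromic n \<longleftrightarrow>
     (let w = bin_digits n; L = length w in
        n > 0 \<and> even L \<and>
        (\<forall>i\<in>{1..L}. of_bool (w ! (i - 1)) + of_bool (w ! (L - i)) = (1::nat)))"

type_synonym state = "nat \<Rightarrow> nat"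

datatype aexp = N nat | V nat | Plus aexp aexp | Minus aexp aexp | Times aexp aexp

fun aval :: "aexp \<Rightarrow> state \<Rightarrow> nat" where
  "aval (N k) s = k"
| "aval (V x) s = s x"
| "aval (Plus a b) s = aval a s + aval b s"
| "aval (Minus a b) s = aval a s - aval b s"
| "aval (Times a b) s = aval a s * aval b s"

datatype bexp = Bc bool | Not bexp | And bexp bexp | Less aexp aexp

fun bval :: "bexp \<Rightarrow> state \<Rightarrow> bool" where
  "bval (Bc v) s = v"
| "bval (Not b) s = (\<not> bval b s)"
| "bval (And b1 b2) s = (bval b1 s \<and> bval b2 s)"
| "bval (Less a1 a2) s = (aval a1 s < aval a2 s)"

datatype com = SKIP | Assign nat aexp | Seq com com | If bexp com com | While bexp com

inductive big_step :: "com \<Rightarrow> state \<Rightarrow> state \<Rightarrow> bool" where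
  Skip: "big_step SKIP s s"
| Assign: "big_step (Assign x a) s (s(x := aval a s))"
| Seq: "big_step c1 s1 s2 \<Longrightarrow> big_step c2 s2 s3 \<Longrightarrow> big_step (Seq c1 c2) s1 s3"
| IfTrue: "bval b s \<Longrightarrow> big_step c1 s t \<Longrightarrow> big_step (If b c1 c2) s t"
| IfFalse: "\<not> bval b s \<Longrightarrow> big_step c2 s t \<Longrightarrow> big_step (If b c1 c2) s t"
| WhileFalse: "\<not> bval b s \<Longrightarrow> big_step (While b c) s s"
| WhileTrue: "bval b s1 \<Longrightarrow> big_step c s1 s2 \<Longrightarrow> big_step (While b c) s2 s3
              \<Longrightarrow> big_step (While b c) s1 s3"

definition init2 :: "nat \<Rightarrow> nat \<Rightarrow> state" where
  "init2 p q = (\<lambda>i. if i = 0 then p else if i = 1 then q else 0)"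

end

theory Submission
  imports Defs
begin


declare bin_digits.simps[simp del]

fun val :: "bool list \<Rightarrow> nat" where
  "val [] = 0"
| "val (b # xs) = of_bool b * 2 ^ length xs + val xs"

definition nr :: "bool list \<Rightarrow> bool list" where "nr u = map HOL.Not (rev u)"

lemma val_append: "val (xs @ ys) = val xs * 2 ^ length ys + val ys"
  by (induction xs) (auto simp: algebra_simps power_add)

lemma val_snoc: "val (xs @ [b]) = 2 * val xs + of_bool b"
  by (simp add: val_append)

lemma val_less: "val xs < 2 ^ length xs"
proof (induction xs)
  case (Cons b xs) then show ?case by (cases b) auto
qed simp

lemma val_hd: "xs \<noteq> [] \<Longrightarrow> hd xs \<Longrightarrow> 2 ^ (length xs - 1) \<le> val xs"
  by (cases xs) auto

lemma val_nothd: "xs \<noteq> [] \<Longrightarrow> \<not> hd xs \<Longrightarrow> val xs < 2 ^ (length xs - 1)"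
  by (cases xs) (auto simp: val_less)

lemma bin_digits_0[simp]: "bin_digits 0 = []"
  by (simp add: bin_digits.simps)

lemma bin_digits_pos: "n > 0 \<Longrightarrow> bin_digits n = bin_digits (n div 2) @ [odd n]"
  by (simp add: bin_digits.simps)

lemma val_bin_digits: "val (bin_digits n) = n"
proof (induction n rule: less_induct)
  case (less n)
  show ?case
  proof (cases "n = 0")
    case False
    then have "val (bin_digits n) = 2 * val (bin_digits (n div 2)) + of_bool (odd n)"
      by (simp add: bin_digits_pos val_snoc)
    also have "\<dots> = n" using less.IH[of "n div 2"] False by simp
    finally show ?thesis .
  qed simp
qed

lemma bin_digits_hd: "n > 0 \<Longrightarrow> bin_digits n \<noteq> [] \<and> hd (bin_digits n)"
proof (induction n rule: less_induct)
  case (less n)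
  show ?case
  proof (cases "n div 2 = 0")
    case True
    then have "n = 1" using less.prems by auto
    then show ?thesis by (simp add: bin_digits_pos)
  next
    case False
    then show ?thesis using less.IH[of "n div 2"] less.prems by (simp add: bin_digits_pos[of n])
  qed
qed

lemma bin_digits_val: "xs \<noteq> [] \<Longrightarrow> hd xs \<Longrightarrow> bin_digits (val xs) = xs"
proof (induction xs rule: rev_induct)
  case (snoc b ys)
  show ?case
  proof (cases "ys = []")
    case True
    then show ?thesis using snoc.prems by (simp add: bin_digits_pos)
  next
    case False
    then have h: "hd ys" using snoc.prems by simp
    then have "val ys > 0" using val_hd[OF False] by (meson less_le_trans zero_less_numeral zero_less_power)
    then show ?thesis using snoc.IH[OF False h]
      by (simp add: val_snoc bin_digits_pos)
  qed
qed simp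

lemma nr_append: "nr (x @ z) = nr z @ nr x"
  by (simp add: nr_def)

lemma length_nr[simp]: "length (nr u) = length u"
  by (simp add: nr_def)

lemma anti_word: "(\<forall>i\<in>{1..length w}. of_bool (w ! (i - 1)) + of_bool (w ! (length w - i)) = (1::nat))
   \<longleftrightarrow> (\<forall>j<length w. w ! j = (\<not> w ! (length w - 1 - j)))"
proof
  assume H: "\<forall>i\<in>{1..length w}. of_bool (w ! (i - 1)) + of_bool (w ! (length w - i)) = (1::nat)"
  show "\<forall>j<length w. w ! j = (\<not> w ! (length w - 1 - j))"
  proof (intro allI impI)
    fix j assume "j < length w"
    then have "Suc j \<in> {1..length w}" by auto
    from H[rule_format, OF this] show "w ! j = (\<not> w ! (length w - 1 - j))"
      by (auto simp: of_bool_def split: if_splits)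
  qed
next
  assume H: "\<forall>j<length w. w ! j = (\<not> w ! (length w - 1 - j))"
  show "\<forall>i\<in>{1..length w}. of_bool (w ! (i - 1)) + of_bool (w ! (length w - i)) = (1::nat)"
  proof
    fix i assume "i \<in> {1..length w}"
    then have "i - 1 < length w" "length w - 1 - (i - 1) = length w - i" by auto
    from H[rule_format, OF this(1)] this(2) show "of_bool (w ! (i - 1)) + of_bool (w ! (length w - i)) = (1::nat)"
      by auto
  qed
qed

lemma nth_anti: assumes "j < 2 * length u"
  shows "(u @ nr u) ! (2 * length u - 1 - j) = (\<not> (u @ nr u) ! j)"
proof (cases "j < length u")
  case True
  define l where "l = length u"
  have i: "2 * length u - 1 - j = l + (l - 1 - j)" using True l_def by simp
  have "(u @ nr u) ! (2 * length u - 1 - j) = nr u ! (l - 1 - j)"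
    unfolding i l_def by (rule nth_append_length_plus)
  also have "\<dots> = (\<not> rev u ! (l - 1 - j))" unfolding nr_def using True l_def by simp
  also have "rev u ! (l - 1 - j) = u ! j" using True l_def by (simp add: rev_nth)
  also have "u ! j = (u @ nr u) ! j" using True by (rule nth_append_left[symmetric])
  finally show ?thesis .
next
  case False
  define l where "l = length u"
  have i: "2 * length u - 1 - j = l - 1 - (j - l)" using False l_def by simp
  have i2: "j = l + (j - l)" using False l_def by simp
  have "(u @ nr u) ! (2 * length u - 1 - j) = u ! (l - 1 - (j - l))"
    unfolding i using False assms l_def by (intro nth_append_left) simp
  also have "\<dots> = rev u ! (j - l)" using False assms l_def by (simp add: rev_nth)
  also have "\<dots> = (\<not> nr u ! (j - l))" unfolding nr_def using False assms l_def by simp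
  also have "nr u ! (j - l) = (u @ nr u) ! j" 
    by (subst i2) (simp only: l_def nth_append_length_plus)
  finally show ?thesis .
qed

lemma anti_word2: "(\<forall>j<length w. w ! j = (\<not> w ! (length w - 1 - j))) \<and> even (length w)
   \<longleftrightarrow> w = take (length w div 2) w @ nr (take (length w div 2) w)"
proof
  assume H: "(\<forall>j<length w. w ! j = (\<not> w ! (length w - 1 - j))) \<and> even (length w)"
  define m where "m = length w div 2"
  have L: "length w = 2 * m" using H m_def by auto
  show "w = take (length w div 2) w @ nr (take (length w div 2) w)"
    unfolding m_def[symmetric]
  proof (rule nth_equalityI)
    show "length w = length (take m w @ nr (take m w))" using L by simp
    fix j assume "j < length w"
    show "w ! j = (take m w @ nr (take m w)) ! j"
    proof (cases "j < m")
      case True then show ?thesis using L by (simp add: nth_append)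
    next
      case False
      then have "(take m w @ nr (take m w)) ! j = (\<not> (rev (take m w)) ! (j - m))"
        using L \<open>j < length w\<close> by (simp add: nth_append nr_def)
      also have "\<dots> = (\<not> w ! (length w - 1 - j))"
        using L \<open>j < length w\<close> False by (auto simp: rev_nth mult_2)
      finally have c: "(take m w @ nr (take m w)) ! j = (\<not> w ! (length w - 1 - j))" .
      have "w ! j = (\<not> w ! (length w - 1 - j))" using H \<open>j < length w\<close> by blast
      then show ?thesis using c by (simp only:)
    qed
  qed
next
  assume H: "w = take (length w div 2) w @ nr (take (length w div 2) w)"
  define u where "u = take (length w div 2) w"
  have W: "w = u @ nr u" unfolding u_def by (rule H)
  have E: "even (length w)" unfolding W by simp
  have "\<forall>j<length w. w ! j = (\<not> w ! (length w - 1 - j))"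
  proof (intro allI impI)
    fix j assume j: "j < length w"
    have "j < 2 * length u" using j unfolding W by simp
    from nth_anti[OF this] show "w ! j = (\<not> w ! (length w - 1 - j))"
      unfolding W by (simp add: mult_2)
  qed
  then show "(\<forall>j<length w. w ! j = (\<not> w ! (length w - 1 - j))) \<and> even (length w)"
    using E by blast
qed

lemma anti_iff: "antipalindromic n \<longleftrightarrow> (\<exists>u. u \<noteq> [] \<and> hd u \<and> n = val (u @ nr u))"
proof
  assume A: "antipalindromic n"
  define w where "w = bin_digits n"
  define u where "u = take (length w div 2) w"
  have P0: "n > 0 \<and> even (length w) \<and> (\<forall>i\<in>{1..length w}. of_bool (w ! (i - 1)) + of_bool (w ! (length w - i)) = (1::nat))"
    using A unfolding antipalindromic_def Let_def w_def .
  have P3: "\<forall>j<length w. w ! j = (\<not> w ! (length w - 1 - j))"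
    using P0 anti_word[of w] by blast
  have W: "w = u @ nr u" unfolding u_def using anti_word2[of w] P0 P3 by blast
  have "w \<noteq> []" "hd w" using bin_digits_hd P0 w_def by auto
  then have "u \<noteq> []" "hd u" using W by (auto simp: nr_def)
  moreover have "n = val (u @ nr u)" using W val_bin_digits[of n] w_def by simp
  ultimately show "\<exists>u. u \<noteq> [] \<and> hd u \<and> n = val (u @ nr u)" by blast
next
  assume "\<exists>u. u \<noteq> [] \<and> hd u \<and> n = val (u @ nr u)"
  then obtain u where u: "u \<noteq> []" "hd u" "n = val (u @ nr u)" by blast
  define w where "w = bin_digits n"
  have bd: "w = u @ nr u" using bin_digits_val[of "u @ nr u"] u w_def by simp
  have "2 ^ (length (u @ nr u) - 1) \<le> n" using val_hd[of "u @ nr u"] u by simp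
  then have "n > 0" by (meson less_le_trans zero_less_numeral zero_less_power)
  moreover have "even (length w)" using bd by simp
  moreover have "w = take (length w div 2) w @ nr (take (length w div 2) w)"
    using bd by simp
  then have "\<forall>j<length w. w ! j = (\<not> w ! (length w - 1 - j))"
    using anti_word2[of w] by blast
  then have "\<forall>i\<in>{1..length w}. of_bool (w ! (i - 1)) + of_bool (w ! (length w - i)) = (1::nat)"
    using anti_word[of w] by blast
  ultimately show "antipalindromic n"
    unfolding antipalindromic_def Let_def w_def[symmetric] by blast
qed



definition G :: "nat \<Rightarrow> nat \<Rightarrow> bool" where
  "G m A \<longleftrightarrow> (\<exists>u. length u = m \<and> A = val (u @ nr u))"

fun gtest :: "nat \<Rightarrow> nat \<Rightarrow> bool" where
  "gtest 0 A = (A = 0)"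
| "gtest (Suc k) A = (if 2 ^ (2 * k + 1) \<le> A then even (A - 2 ^ (2 * k + 1)) \<and> gtest k ((A - 2 ^ (2 * k + 1)) div 2)
                       else odd A \<and> gtest k (A div 2))"

lemma val_cons: "val (b # xs) = of_bool b * 2 ^ length xs + val xs" by simp

lemma val_anti_cons: "val ((b # u) @ nr (b # u)) = of_bool b * 2 ^ (2 * length u + 1) + 2 * val (u @ nr u) + of_bool (\<not> b)"
proof -
  have "(b # u) @ nr (b # u) = b # ((u @ nr u) @ [\<not> b])" by (simp add: nr_def)
  then show ?thesis by (simp only: val_cons val_snoc) (simp add: mult_2)
qed

lemma G_0: "G 0 A \<longleftrightarrow> A = 0" by (simp add: G_def nr_def)

lemma G_less: "G k g \<Longrightarrow> g < 2 ^ (2 * k)"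
  unfolding G_def using val_less by (metis length_append length_nr mult_2)

lemma G_Suc: "G (Suc k) A \<longleftrightarrow> (\<exists>b g. G k g \<and> A = of_bool b * 2 ^ (2 * k + 1) + 2 * g + of_bool (\<not> b))"
proof
  assume "G (Suc k) A"
  then obtain u where u: "length u = Suc k" "A = val (u @ nr u)" by (auto simp: G_def)
  then obtain b u0 where "u = b # u0" by (cases u) auto
  then show "\<exists>b g. G k g \<and> A = of_bool b * 2 ^ (2 * k + 1) + 2 * g + of_bool (\<not> b)"
    using u val_anti_cons[of b u0] unfolding G_def by auto
next
  assume "\<exists>b g. G k g \<and> A = of_bool b * 2 ^ (2 * k + 1) + 2 * g + of_bool (\<not> b)"
  then obtain b u0 where "length u0 = k" "A = of_bool b * 2 ^ (2 * k + 1) + 2 * val (u0 @ nr u0) + of_bool (\<not> b)"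
    unfolding G_def by blast
  then show "G (Suc k) A" unfolding G_def using val_anti_cons[of b u0]
    by (metis length_Cons)
qed

lemma gtest_G: "gtest k A \<longleftrightarrow> G k A"
proof (induction k arbitrary: A)
  case 0 then show ?case by (simp add: G_0)
next
  case (Suc k)
  define P :: nat where "P = 2 ^ (2 * k + 1)"
  have P2: "P = 2 * 2 ^ (2 * k)" unfolding P_def by simp
  show ?case
  proof
    assume g: "gtest (Suc k) A"
    show "G (Suc k) A"
    proof (cases "P \<le> A")
      case True
      then have "even (A - P)" "gtest k ((A - P) div 2)" using g unfolding P_def by auto
      then have "G k ((A - P) div 2)" "A = of_bool True * P + 2 * ((A - P) div 2) + of_bool (\<not> True)"
        using Suc.IH True by auto
      then show ?thesis unfolding G_Suc P_def by blast
    next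
      case False
      then have "odd A" "gtest k (A div 2)" using g unfolding P_def by auto
      then have "G k (A div 2)" "A = of_bool False * P + 2 * (A div 2) + of_bool (\<not> False)"
        using Suc.IH by auto
      then show ?thesis unfolding G_Suc P_def by blast
    qed
  next
    assume "G (Suc k) A"
    then obtain b g where bg: "G k g" "A = of_bool b * P + 2 * g + of_bool (\<not> b)"
      unfolding G_Suc P_def by blast
    have gl: "g < 2 ^ (2 * k)" using G_less[OF bg(1)] .
    have gs: "gtest (Suc k) A = (if P \<le> A then even (A - P) \<and> gtest k ((A - P) div 2) else odd A \<and> gtest k (A div 2))"
      unfolding P_def by (simp only: gtest.simps)
    show "gtest (Suc k) A"
    proof (cases b)
      case True
      then have "A = P + 2 * g" using bg by simp
      then show ?thesis unfolding gs using Suc.IH bg(1) by simp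
    next
      case False
      then have "A = 2 * g + 1" using bg by simp
      moreover have "2 * g + 1 < P" using gl P2 by simp
      ultimately show ?thesis unfolding gs using Suc.IH bg(1) by simp
    qed
  qed
qed

lemma anti_gtest: "antipalindromic A \<longleftrightarrow> (\<exists>m. 1 \<le> m \<and> m \<le> A \<and> 2 ^ (2 * m - 1) \<le> A \<and> gtest m A)"
proof
  assume "antipalindromic A"
  then obtain u where u: "u \<noteq> []" "hd u" "A = val (u @ nr u)" unfolding anti_iff by blast
  define m where "m = length u"
  have m1: "1 \<le> m" using u m_def by (cases u) auto
  have "2 ^ (2 * m - 1) \<le> A" using val_hd[of "u @ nr u"] u m_def by (simp add: mult_2)
  moreover have "m \<le> 2 ^ (2 * m - 1)"
  proof -
    have "m < 2 ^ m" by (rule less_exp)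
    also have "\<dots> \<le> 2 ^ (2 * m - 1)" by (rule power_increasing) (use m1 in auto)
    finally show ?thesis by simp
  qed
  moreover have "gtest m A" unfolding gtest_G G_def using u m_def by blast
  ultimately show "\<exists>m. 1 \<le> m \<and> m \<le> A \<and> 2 ^ (2 * m - 1) \<le> A \<and> gtest m A" using m1 by auto
next
  assume "\<exists>m. 1 \<le> m \<and> m \<le> A \<and> 2 ^ (2 * m - 1) \<le> A \<and> gtest m A"
  then obtain m u where mu: "1 \<le> m" "2 ^ (2 * m - 1) \<le> A" "length u = m" "A = val (u @ nr u)"
    unfolding gtest_G G_def by blast
  then have ne: "u \<noteq> []" by auto
  have "hd u"
  proof (rule ccontr)
    assume "\<not> hd u"
    then have "val (u @ nr u) < 2 ^ (length (u @ nr u) - 1)" using ne by (intro val_nothd) auto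
    then show False using mu by (simp add: mult_2)
  qed
  then show "antipalindromic A" unfolding anti_iff using ne mu by blast
qed



definition Hf :: "nat \<Rightarrow> nat \<Rightarrow> nat \<Rightarrow> bool list \<Rightarrow> bool list \<Rightarrow> int" where
  "Hf p q d x y = int q * int (val x) * 2 ^ (2 * d) - int p * int (val y)"

definition Ef :: "nat \<Rightarrow> nat \<Rightarrow> nat \<Rightarrow> bool list \<Rightarrow> bool list \<Rightarrow> bool list \<Rightarrow> bool list \<Rightarrow> int" where
  "Ef p q d x y z w = Hf p q d x y * 2 ^ (2 * length w) + int q * int (val (z @ nr z)) - int p * int (val (w @ nr w))"

definition cf :: "nat \<Rightarrow> nat \<Rightarrow> bool list \<Rightarrow> bool list \<Rightarrow> int" where
  "cf p q x y = int q * int (val (nr x)) - int p * int (val (nr y))"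

lemma val_anti_split: "val ((x @ z) @ nr (x @ z)) = val x * 2 ^ (2 * length z + length x) + val (z @ nr z) * 2 ^ length x + val (nr x)"
proof -
  have "(x @ z) @ nr (x @ z) = x @ ((z @ nr z) @ nr x)" by (simp add: nr_append)
  then show ?thesis by (simp add: val_append mult_2 mult_2_right algebra_simps power_add)
qed

lemma ident:
  assumes "length x = length y" "length z = length w + d"
  shows "int q * int (val ((x @ z) @ nr (x @ z))) - int p * int (val ((y @ w) @ nr (y @ w)))
       = 2 ^ length x * Ef p q d x y z w + cf p q x y"
  unfolding val_anti_split Ef_def Hf_def cf_def
  by (simp add: assms power_add mult_2_right algebra_simps)



lemma dbound:
  assumes "hd u" "u \<noteq> []" "length v \<le> length u" "p \<ge> 1"
    and eq: "q * val (u @ nr u) = p * val (v @ nr v)"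
  shows "q * 2 ^ (2 * (length u - length v)) < 2 * p"
proof -
  define m where "m = length u"
  define n where "n = length v"
  define d where "d = m - n"
  have m1: "m \<ge> 1" using assms m_def by (cases u) auto
  have A: "2 ^ (2 * m - 1) \<le> val (u @ nr u)" using val_hd[of "u @ nr u"] assms m_def by (simp add: mult_2)
  have B: "val (v @ nr v) < 2 ^ (2 * n)" using val_less[of "v @ nr v"] n_def by (simp add: mult_2)
  have "q * 2 ^ (2 * m - 1) \<le> q * val (u @ nr u)" using A by simp
  also have "\<dots> = p * val (v @ nr v)" by (rule eq)
  also have "\<dots> < p * 2 ^ (2 * n)" using B assms by simp
  finally have c: "q * 2 ^ (2 * m - 1) < p * 2 ^ (2 * n)" .
  have sm: "2 * m = Suc (2 * m - 1)" using m1 by simp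
  have "(2::nat) ^ (2 * m) = 2 * 2 ^ (2 * m - 1)" by (subst sm) simp
  moreover have "(2::nat) ^ (2 * m) = 2 ^ (2 * d) * 2 ^ (2 * n)" using assms m_def n_def d_def
    by (simp add: power_add[symmetric])
  ultimately have "q * 2 ^ (2 * d) * 2 ^ (2 * n) = 2 * (q * 2 ^ (2 * m - 1))" by simp
  also have "\<dots> < 2 * (p * 2 ^ (2 * n))" using c by simp
  finally have "q * 2 ^ (2 * d) * 2 ^ (2 * n) < (2 * p) * 2 ^ (2 * n)" by simp
  then have "q * 2 ^ (2 * d) < 2 * p" by (simp only: mult_less_cancel2)
  then show ?thesis unfolding d_def m_def n_def .
qed

lemma state_facts:
  assumes p1: "p \<ge> 1" and q1: "q \<ge> 1" and hu: "hd u" "u \<noteq> []" and lv: "length v \<le> length u"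
    and dd: "d = length u - length v"
    and eq: "q * val (u @ nr u) = p * val (v @ nr v)" and k: "k \<le> length v"
  shows "2 ^ k * Ef p q d (take k u) (take k v) (drop k u) (drop k v) + cf p q (take k u) (take k v) = 0"
    and "- int q < Ef p q d (take k u) (take k v) (drop k u) (drop k v)"
    and "Ef p q d (take k u) (take k v) (drop k u) (drop k v) < int p"
    and "- (2 * int p + int q) < Hf p q d (take k u) (take k v)"
    and "Hf p q d (take k u) (take k v) < 2 * int p"
proof -
  define x where "x = take k u"
  define y where "y = take k v"
  define z where "z = drop k u"
  define w where "w = drop k v"
  define E where "E = Ef p q d x y z w"
  define H where "H = Hf p q d x y"
  define c where "c = cf p q x y"
  have lx: "length x = k" "length y = k" using k lv x_def y_def by auto
  have lz: "length z = length w + d" using k lv dd z_def w_def by auto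
  have "int q * int (val ((x @ z) @ nr (x @ z))) - int p * int (val ((y @ w) @ nr (y @ w)))
       = 2 ^ length x * E + c" unfolding E_def c_def by (rule ident) (use lx lz in auto)
  moreover have "x @ z = u" "y @ w = v" unfolding x_def y_def z_def w_def by auto
  moreover have "int q * int (val (u @ nr u)) = int p * int (val (v @ nr v))"
    using eq by (metis of_nat_mult)
  ultimately have E0: "2 ^ k * E + c = 0" using lx by simp
  then show "2 ^ k * Ef p q d (take k u) (take k v) (drop k u) (drop k v) + cf p q (take k u) (take k v) = 0"
    unfolding E_def c_def x_def y_def z_def w_def .
  have a1: "int (val (nr x)) < 2 ^ k" using val_less[of "nr x"] lx by (simp add: of_nat_less_iff[symmetric])
  have a2: "int (val (nr y)) < 2 ^ k" using val_less[of "nr y"] lx by (simp add: of_nat_less_iff[symmetric])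
  have c1: "c < int q * 2 ^ k"
  proof -
    have "c \<le> int q * int (val (nr x))" unfolding c_def cf_def by simp
    also have "\<dots> < int q * 2 ^ k" using a1 q1 by simp
    finally show ?thesis .
  qed
  have c2: "- (int p * 2 ^ k) < c"
  proof -
    have "- (int p * 2 ^ k) < - (int p * int (val (nr y)))" using a2 p1 by simp
    also have "\<dots> \<le> c" unfolding c_def cf_def by simp
    finally show ?thesis .
  qed
  have cE: "c = - (2 ^ k * E)" using E0 by simp
  have "2 ^ k * (- int q) = - (int q * 2 ^ k)" "2 ^ k * int p = int p * 2 ^ k" by simp_all
  then have "2 ^ k * (- int q) < 2 ^ k * E" "2 ^ k * E < 2 ^ k * int p" using c1 c2 cE by linarith+
  then have Eb: "- int q < E" "E < int p"
    using mult_less_cancel_left_pos[of "2 ^ k :: int" "- int q" E] mult_less_cancel_left_pos[of "2 ^ k :: int" E "int p"]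
    by auto
  then show "- int q < Ef p q d (take k u) (take k v) (drop k u) (drop k v)"
     "Ef p q d (take k u) (take k v) (drop k u) (drop k v) < int p"
    unfolding E_def x_def y_def z_def w_def by auto
  define T :: int where "T = 2 ^ (2 * length w)"
  have T1: "T \<ge> 1" unfolding T_def by simp
  define mz where "mz = int (val (z @ nr z))"
  define mw where "mw = int (val (w @ nr w))"
  have "val (z @ nr z) < 2 ^ (2 * length z)" using val_less[of "z @ nr z"] by (simp add: mult_2)
  also have "(2::nat) ^ (2 * length z) = 2 ^ (2 * d) * 2 ^ (2 * length w)" using lz
    by (simp add: power_add[symmetric] algebra_simps)
  finally have "int (val (z @ nr z)) < int (2 ^ (2 * d) * 2 ^ (2 * length w))" by (simp only: of_nat_less_iff)
  then have mz: "0 \<le> mz" "mz < 2 ^ (2 * d) * T" unfolding mz_def T_def by simp_all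
  have mw: "0 \<le> mw" "mw < T" unfolding mw_def T_def
    using val_less[of "w @ nr w"] by (simp_all add: of_nat_less_iff[symmetric] mult_2)
  have HE: "H * T = E - int q * mz + int p * mw" unfolding E_def Ef_def H_def T_def mz_def mw_def by simp
  have "H * T < 2 * int p * T"
  proof -
    have "int p * mw \<le> int p * T" using mw by (simp add: mult_left_mono)
    moreover have "int p * 1 \<le> int p * T" using T1 by (intro mult_left_mono) auto
    moreover have "0 \<le> int q * mz" using mz by simp
    ultimately show ?thesis using HE Eb by (simp add: algebra_simps)
  qed
  then show "Hf p q d (take k u) (take k v) < 2 * int p"
    using T1 unfolding H_def x_def y_def by (simp add: mult_less_cancel_right)
  have "q * 2 ^ (2 * d) < 2 * p"
    using dbound[OF hu(1) hu(2) lv p1 eq] dd by simp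
  then have "int (q * 2 ^ (2 * d)) < int (2 * p)" by (simp only: of_nat_less_iff)
  then have qd: "int q * 2 ^ (2 * d) < 2 * int p" by simp
  have "- (2 * int p + int q) * T < H * T"
  proof -
    have "int q * mz \<le> int q * (2 ^ (2 * d) * T)" using mz by (simp add: mult_left_mono)
    also have "\<dots> = (int q * 2 ^ (2 * d)) * T" by simp
    also have "\<dots> \<le> 2 * int p * T" using qd T1 by (simp add: mult_right_mono)
    finally have "int q * mz \<le> 2 * int p * T" .
    moreover have "int q * 1 \<le> int q * T" using T1 by (intro mult_left_mono) auto
    moreover have "0 \<le> int p * mw" using mw by simp
    ultimately show ?thesis using HE Eb by (simp add: algebra_simps)
  qed
  then show "- (2 * int p + int q) < Hf p q d (take k u) (take k v)"
    using T1 unfolding H_def x_def y_def by (simp add: mult_less_cancel_right)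
qed



definition Kb :: "nat \<Rightarrow> nat \<Rightarrow> nat" where "Kb p q = (4 * p + q + 1) * (p + q + 1)"

lemma hd_take_pos: "xs \<noteq> [] \<Longrightarrow> 0 < n \<Longrightarrow> hd (take n xs) = hd xs"
  by (cases xs; cases n) auto

lemma shrink:
  assumes p1: "p \<ge> 1" and q1: "q \<ge> 1" and hu: "hd u" "u \<noteq> []" and hv: "hd v" "v \<noteq> []"
    and lv: "length v \<le> length u"
    and eq: "q * val (u @ nr u) = p * val (v @ nr v)" and big: "Kb p q < length v"
  shows "\<exists>u' v'. hd u' \<and> u' \<noteq> [] \<and> hd v' \<and> v' \<noteq> [] \<and> length v' < length v \<and> length v' \<le> length u'
     \<and> length u' - length v' = length u - length v \<and> q * val (u' @ nr u') = p * val (v' @ nr v')"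
proof -
  define d where "d = length u - length v"
  define f where "f = (\<lambda>k. (Hf p q d (take k u) (take k v), Ef p q d (take k u) (take k v) (drop k u) (drop k v)))"
  define S :: "(int \<times> int) set" where "S = {- (2 * int p + int q)..2 * int p} \<times> {- int q..int p}"
  have e1: "2 * int p - - (2 * int p + int q) + 1 = int (4 * p + q + 1)" by simp
  have e2: "int p - - int q + 1 = int (p + q + 1)" by simp
  have cardS: "card S = Kb p q" unfolding S_def Kb_def card_cartesian_product card_atLeastAtMost_int e1 e2 nat_int ..
  have fS: "f ` {1..Kb p q + 1} \<subseteq> S"
  proof
    fix s assume "s \<in> f ` {1..Kb p q + 1}"
    then obtain k where k: "k \<in> {1..Kb p q + 1}" "s = f k" by blast
    then have kv: "k \<le> length v" using big by auto
    note sf = state_facts[OF p1 q1 hu lv d_def eq kv]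
    show "s \<in> S" unfolding k(2) f_def S_def using sf(2-5) by auto
  qed
  have "\<not> inj_on f {1..Kb p q + 1}"
  proof
    assume "inj_on f {1..Kb p q + 1}"
    from card_inj_on_le[OF this fS] have "card {1..Kb p q + 1} \<le> card S" unfolding S_def by simp
    then show False using cardS by simp
  qed
  then obtain a b where ab: "a \<in> {1..Kb p q + 1}" "b \<in> {1..Kb p q + 1}" "a \<noteq> b" "f a = f b"
    unfolding inj_on_def by blast
  define k1 where "k1 = min a b"
  define k2 where "k2 = max a b"
  have kk: "1 \<le> k1" "k1 < k2" "k2 \<le> length v" "f k1 = f k2"
    using ab big unfolding k1_def k2_def by (auto simp: min_def max_def)
  define x where "x = take k1 u"
  define y where "y = take k1 v"
  define z where "z = drop k2 u"
  define w where "w = drop k2 v"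
  have lx: "length x = k1" "length y = k1" using kk lv x_def y_def by auto
  have lz: "length z = length w + d" using kk lv d_def z_def w_def by auto
  have id: "int q * int (val ((x @ z) @ nr (x @ z))) - int p * int (val ((y @ w) @ nr (y @ w)))
       = 2 ^ length x * Ef p q d x y z w + cf p q x y" by (rule ident) (use lx lz in auto)
  have H12: "Hf p q d x y = Hf p q d (take k2 u) (take k2 v)" using kk(4) unfolding f_def x_def y_def by simp
  have E12: "Ef p q d (take k1 u) (take k1 v) (drop k1 u) (drop k1 v) = Ef p q d (take k2 u) (take k2 v) (drop k2 u) (drop k2 v)"
    using kk(4) unfolding f_def by simp
  have "Ef p q d x y z w = Ef p q d (take k2 u) (take k2 v) (drop k2 u) (drop k2 v)"
    unfolding Ef_def H12 z_def w_def ..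
  also have "\<dots> = Ef p q d x y (drop k1 u) (drop k1 v)" using E12 unfolding x_def y_def by simp
  finally have Exy: "Ef p q d x y z w = Ef p q d x y (drop k1 u) (drop k1 v)" .
  have "2 ^ k1 * Ef p q d x y (drop k1 u) (drop k1 v) + cf p q x y = 0"
    using state_facts(1)[OF p1 q1 hu lv d_def eq] kk unfolding x_def y_def by simp
  then have "int q * int (val ((x @ z) @ nr (x @ z))) = int p * int (val ((y @ w) @ nr (y @ w)))"
    using id Exy lx by simp
  then have eq': "q * val ((x @ z) @ nr (x @ z)) = p * val ((y @ w) @ nr (y @ w))"
    by (metis of_nat_eq_iff of_nat_mult)
  have hx: "x \<noteq> []" "hd x" using hu kk lx unfolding x_def by (auto simp: hd_take_pos)
  have hy: "y \<noteq> []" "hd y" using hv kk lx unfolding y_def by (auto simp: hd_take_pos)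
  show ?thesis
  proof (intro exI conjI)
    show "hd (x @ z)" "x @ z \<noteq> []" using hx by auto
    show "hd (y @ w)" "y @ w \<noteq> []" using hy by auto
    show "length (y @ w) < length v" using lx kk w_def by auto
    show "length (y @ w) \<le> length (x @ z)" using lx lz by simp
    show "length (x @ z) - length (y @ w) = length u - length v" using lx lz d_def by simp
    show "q * val ((x @ z) @ nr (x @ z)) = p * val ((y @ w) @ nr (y @ w))" by (rule eq')
  qed
qed

lemma bound_ex:
  assumes p1: "p \<ge> 1" and q1: "q \<ge> 1"
  shows "hd u \<Longrightarrow> u \<noteq> [] \<Longrightarrow> hd v \<Longrightarrow> v \<noteq> [] \<Longrightarrow> length v \<le> length u \<Longrightarrow>
    q * val (u @ nr u) = p * val (v @ nr v) \<Longrightarrow>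
    \<exists>u' v'. hd u' \<and> u' \<noteq> [] \<and> hd v' \<and> v' \<noteq> [] \<and> length v' \<le> Kb p q \<and> length v' \<le> length u'
     \<and> length u' - length v' = length u - length v \<and> q * val (u' @ nr u') = p * val (v' @ nr v')"
proof (induction "length v" arbitrary: u v rule: less_induct)
  case less
  show ?case
  proof (cases "Kb p q < length v")
    case True
    from shrink[OF p1 q1 less.prems(1-2) less.prems(3-4) less.prems(5) less.prems(6) True]
    obtain u' v' where uv: "hd u'" "u' \<noteq> []" "hd v'" "v' \<noteq> []" "length v' < length v" "length v' \<le> length u'"
      "length u' - length v' = length u - length v" "q * val (u' @ nr u') = p * val (v' @ nr v')" by blast
    from less.hyps[OF uv(5) uv(1-4) uv(6) uv(8)] show ?thesis using uv(7) by metis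
  next
    case False
    then show ?thesis using less.prems by (intro exI[of _ u] exI[of _ v]) auto
  qed
qed



definition Mb :: "nat \<Rightarrow> nat \<Rightarrow> nat" where
  "Mb p q = 4 ^ ((4 * p + 4 * q + 1) * (p + q + 1) + 2 * p + 2 * q)"

lemma val_anti_less: "val (u @ nr u) < 4 ^ length u"
  using val_less[of "u @ nr u"] by (simp add: mult_2[symmetric] power_mult)

lemma one_side:
  assumes p1: "p \<ge> 1" and q1: "q \<ge> 1" and hu: "hd u" "u \<noteq> []" and hv: "hd v" "v \<noteq> []"
    and lv: "length v \<le> length u" and eq: "q * val (u @ nr u) = p * val (v @ nr v)"
  shows "\<exists>A B. antipalindromic A \<and> antipalindromic B \<and> q * A = p * B \<and>
     A < 4 ^ (Kb p q + 2 * p) \<and> B < 4 ^ (Kb p q + 2 * p)"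
proof -
  obtain u' v' where uv: "hd u'" "u' \<noteq> []" "hd v'" "v' \<noteq> []" "length v' \<le> Kb p q" "length v' \<le> length u'"
     "q * val (u' @ nr u') = p * val (v' @ nr v')"
    using bound_ex[OF p1 q1 hu hv lv eq] by blast
  define d where "d = length u' - length v'"
  have "q * 2 ^ (2 * d) < 2 * p" unfolding d_def using dbound[OF uv(1) uv(2) uv(6) p1 uv(7)] .
  moreover have "1 * 2 ^ (2 * d) \<le> q * (2::nat) ^ (2 * d)" using q1 by (intro mult_right_mono) auto
  ultimately have "2 ^ (2 * d) < 2 * p" by linarith
  moreover have "d < 2 ^ (2 * d)"
  proof -
    have "d < 2 ^ d" by (rule less_exp)
    also have "(2::nat) ^ d \<le> 2 ^ (2 * d)" by (rule power_increasing) auto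
    finally show ?thesis .
  qed
  ultimately have "d < 2 * p" by simp
  then have lu: "length u' \<le> Kb p q + 2 * p" using uv(5) uv(6) d_def by simp
  have "val (u' @ nr u') < 4 ^ length u'" by (rule val_anti_less)
  also have "(4::nat) ^ length u' \<le> 4 ^ (Kb p q + 2 * p)" using lu by (intro power_increasing) auto
  finally have a: "val (u' @ nr u') < 4 ^ (Kb p q + 2 * p)" .
  have "val (v' @ nr v') < 4 ^ length v'" by (rule val_anti_less)
  also have "(4::nat) ^ length v' \<le> 4 ^ (Kb p q + 2 * p)" using uv(5) by (intro power_increasing) auto
  finally have b: "val (v' @ nr v') < 4 ^ (Kb p q + 2 * p)" .
  show ?thesis
    using a b uv unfolding anti_iff by blast
qed

lemma bounded:
  assumes p1: "p \<ge> 1" and q1: "q \<ge> 1" and A: "antipalindromic A" and B: "antipalindromic B"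
    and eq: "q * A = p * B"
  shows "\<exists>A B. antipalindromic A \<and> antipalindromic B \<and> q * A = p * B \<and> A < Mb p q \<and> B < Mb p q"
proof -
  obtain u where u: "u \<noteq> []" "hd u" "A = val (u @ nr u)" using A unfolding anti_iff by blast
  obtain v where v: "v \<noteq> []" "hd v" "B = val (v @ nr v)" using B unfolding anti_iff by blast
  have "Kb p q \<le> (4 * p + 4 * q + 1) * (p + q + 1)" unfolding Kb_def by (intro mult_mono) auto
  then have k1: "Kb p q + 2 * p \<le> (4 * p + 4 * q + 1) * (p + q + 1) + 2 * p + 2 * q" by linarith
  have "Kb q p \<le> (4 * p + 4 * q + 1) * (p + q + 1)" unfolding Kb_def by (intro mult_mono) auto
  then have k2: "Kb q p + 2 * q \<le> (4 * p + 4 * q + 1) * (p + q + 1) + 2 * p + 2 * q" by linarith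
  show ?thesis
  proof (cases "length v \<le> length u")
    case True
    then obtain A' B' where ab: "antipalindromic A'" "antipalindromic B'" "q * A' = p * B'"
      "A' < 4 ^ (Kb p q + 2 * p)" "B' < 4 ^ (Kb p q + 2 * p)"
      using one_side[OF p1 q1 u(2) u(1) v(2) v(1) True] eq u v by blast
    have "(4::nat) ^ (Kb p q + 2 * p) \<le> Mb p q" unfolding Mb_def using k1 by (intro power_increasing) auto
    then show ?thesis using ab by (meson less_le_trans)
  next
    case False
    then obtain B' A' where ab: "antipalindromic B'" "antipalindromic A'" "p * B' = q * A'"
      "B' < 4 ^ (Kb q p + 2 * q)" "A' < 4 ^ (Kb q p + 2 * q)"
      using one_side[OF q1 p1 v(2) v(1) u(2) u(1)] eq u v by fastforce
    have "(4::nat) ^ (Kb q p + 2 * q) \<le> Mb p q" unfolding Mb_def using k2 by (intro power_increasing) auto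
    then show ?thesis using ab by (metis less_le_trans)
  qed
qed

lemma anti_pos: "antipalindromic n \<Longrightarrow> n > 0"
  unfolding antipalindromic_def Let_def by blast

lemma rat_eq:
  assumes "q > 0" "B > 0"
  shows "((of_nat p / of_nat q :: rat) = of_nat A / of_nat B) \<longleftrightarrow> q * A = p * B"
proof -
  have "((of_nat p / of_nat q :: rat) = of_nat A / of_nat B) \<longleftrightarrow> (of_nat p * of_nat B :: rat) = of_nat A * of_nat q"
    using assms by (simp add: frac_eq_eq)
  also have "\<dots> \<longleftrightarrow> p * B = A * q" by (metis of_nat_eq_iff of_nat_mult)
  finally show ?thesis by (auto simp: mult.commute)
qed

lemma char:
  assumes p1: "p \<ge> 1" and q1: "q \<ge> 1"
  shows "(\<exists>A B. antipalindromic A \<and> antipalindromic B \<and> (of_nat p / of_nat q :: rat) = of_nat A / of_nat B)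
    \<longleftrightarrow> (\<exists>A. 1 \<le> A \<and> A \<le> Mb p q \<and> (\<exists>B. 1 \<le> B \<and> B \<le> Mb p q \<and> q * A = p * B \<and> antipalindromic A \<and> antipalindromic B))"
proof
  assume "\<exists>A B. antipalindromic A \<and> antipalindromic B \<and> (of_nat p / of_nat q :: rat) = of_nat A / of_nat B"
  then obtain A B where ab: "antipalindromic A" "antipalindromic B" "q * A = p * B"
    using rat_eq[of q] anti_pos q1 by fastforce
  from bounded[OF p1 q1 ab] obtain A' B' where
    r: "antipalindromic A'" "antipalindromic B'" "q * A' = p * B'" "A' < Mb p q" "B' < Mb p q" by blast
  have "1 \<le> A'" "1 \<le> B'" using anti_pos r by (auto simp: Suc_le_eq)
  then show "\<exists>A. 1 \<le> A \<and> A \<le> Mb p q \<and> (\<exists>B. 1 \<le> B \<and> B \<le> Mb p q \<and> q * A = p * B \<and> antipalindromic A \<and> antipalindromic B)"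
    using r by (meson less_imp_le)
next
  assume "\<exists>A. 1 \<le> A \<and> A \<le> Mb p q \<and> (\<exists>B. 1 \<le> B \<and> B \<le> Mb p q \<and> q * A = p * B \<and> antipalindromic A \<and> antipalindromic B)"
  then obtain A B where ab: "antipalindromic A" "antipalindromic B" "q * A = p * B" by blast
  then show "\<exists>A B. antipalindromic A \<and> antipalindromic B \<and> (of_nat p / of_nat q :: rat) = of_nat A / of_nat B"
    using rat_eq[of q B p A] anti_pos[OF ab(2)] q1 by auto
qed



definition wp :: "com \<Rightarrow> state \<Rightarrow> (state \<Rightarrow> bool) \<Rightarrow> bool" where
  "wp c s Q \<longleftrightarrow> (\<exists>t. big_step c s t \<and> Q t)"

lemma wp_seq: "wp c1 s (\<lambda>m. wp c2 m Q) \<Longrightarrow> wp (Seq c1 c2) s Q"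
  unfolding wp_def by (blast intro: big_step.Seq)

lemma wp_assign: "Q (s(x := aval a s)) \<Longrightarrow> wp (Assign x a) s Q"
  unfolding wp_def by (blast intro: big_step.Assign)

lemma wp_skip: "Q s \<Longrightarrow> wp SKIP s Q"
  unfolding wp_def by (blast intro: big_step.Skip)

lemma wp_if: "(bval b s \<Longrightarrow> wp c1 s Q) \<Longrightarrow> (\<not> bval b s \<Longrightarrow> wp c2 s Q) \<Longrightarrow> wp (If b c1 c2) s Q"
  unfolding wp_def by (cases "bval b s") (blast intro: big_step.IfTrue big_step.IfFalse)+

lemma wp_mono: "wp c s P \<Longrightarrow> (\<And>t. P t \<Longrightarrow> Q t) \<Longrightarrow> wp c s Q"
  unfolding wp_def by blast

lemma wp_while:
  fixes f :: "state \<Rightarrow> nat"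
  assumes "I s"
    and step: "\<And>s. I s \<Longrightarrow> bval b s \<Longrightarrow> wp c s (\<lambda>t. I t \<and> f t < f s)"
    and fin: "\<And>s. I s \<Longrightarrow> \<not> bval b s \<Longrightarrow> Q s"
  shows "wp (While b c) s Q"
  using assms(1)
proof (induction "f s" arbitrary: s rule: less_induct)
  case less
  show ?case
  proof (cases "bval b s")
    case True
    from step[OF less.prems True] obtain m where m: "big_step c s m" "I m" "f m < f s"
      unfolding wp_def by blast
    from less.hyps[OF m(3) m(2)] obtain t where "big_step (While b c) m t" "Q t"
      unfolding wp_def by blast
    then show ?thesis unfolding wp_def using True m(1) by (blast intro: big_step.WhileTrue)
  next
    case False
    then show ?thesis unfolding wp_def using fin[OF less.prems False] by (blast intro: big_step.WhileFalse)
  qed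
qed

definition pow_c :: com where
  "pow_c = Seq (Assign 22 (N 1)) (Seq (Assign 23 (N 0))
     (While (Less (V 23) (V 21)) (Seq (Assign 22 (Times (V 22) (V 20))) (Assign 23 (Plus (V 23) (N 1))))))"

lemma pow_spec: "wp pow_c s (\<lambda>t. t 22 = s 20 ^ s 21 \<and> (\<forall>i. i \<noteq> 22 \<and> i \<noteq> 23 \<longrightarrow> t i = s i))"
  unfolding pow_c_def
  apply (rule wp_seq, rule wp_assign, rule wp_seq, rule wp_assign)
  apply (rule wp_while[where I = "\<lambda>t. t 22 = s 20 ^ t 23 \<and> t 23 \<le> s 21 \<and> (\<forall>i. i \<noteq> 22 \<and> i \<noteq> 23 \<longrightarrow> t i = s i)"
        and f = "\<lambda>t. s 21 - t 23"])
    apply simp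
   apply (rule wp_seq, rule wp_assign, rule wp_assign)
   apply (auto simp: power_Suc2)
  done

definition div2_c :: com where
  "div2_c = Seq (Assign 32 (N 0))
     (While (Less (Times (Plus (V 32) (N 1)) (N 2)) (Plus (V 30) (N 1))) (Assign 32 (Plus (V 32) (N 1))))"

lemma div2_spec: "wp div2_c s (\<lambda>t. t 32 = s 30 div 2 \<and> (\<forall>i. i \<noteq> 32 \<longrightarrow> t i = s i))"
  unfolding div2_c_def
  apply (rule wp_seq, rule wp_assign)
  apply (rule wp_while[where I = "\<lambda>t. 2 * t 32 \<le> s 30 \<and> (\<forall>i. i \<noteq> 32 \<longrightarrow> t i = s i)"
        and f = "\<lambda>t. s 30 - t 32"])
    apply simp
   apply (rule wp_assign)
   apply auto
  done



definition gbody :: com where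
  "gbody = Seq (Assign 20 (N 2)) (Seq (Assign 21 (Minus (Times (N 2) (V 41)) (N 1))) (Seq pow_c
     (Seq (If (Less (V 40) (V 22)) (Assign 43 (N 1)) (Seq (Assign 40 (Minus (V 40) (V 22))) (Assign 43 (N 0))))
     (Seq (Assign 30 (V 40)) (Seq div2_c
     (Seq (If (Not (And (Not (Less (Minus (V 40) (Times (N 2) (V 32))) (V 43))) (Not (Less (V 43) (Minus (V 40) (Times (N 2) (V 32)))))))
              (Assign 42 (N 0)) SKIP)
     (Seq (Assign 40 (V 32)) (Assign 41 (Minus (V 41) (N 1))))))))))"

definition Wg :: "nat set" where "Wg = {20, 21, 22, 23, 30, 32, 40, 41, 42, 43}"

lemma gbody_spec:
  assumes "s 41 = Suc k"
  shows "wp gbody s (\<lambda>t. t 41 = k \<and>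
     t 40 = (if 2 ^ (2 * k + 1) \<le> s 40 then (s 40 - 2 ^ (2 * k + 1)) div 2 else s 40 div 2) \<and>
     t 42 = (if (if 2 ^ (2 * k + 1) \<le> s 40 then even (s 40 - 2 ^ (2 * k + 1)) else odd (s 40)) then s 42 else 0) \<and>
     (\<forall>i. i \<notin> Wg \<longrightarrow> t i = s i))"
  unfolding gbody_def
  apply (intro wp_seq wp_assign wp_if wp_skip wp_mono[OF pow_spec] wp_mono[OF div2_spec])
  using assms apply (auto simp: Wg_def)
   apply presburger
  apply (subgoal_tac "s 40 = 2 * 2 ^ (2 * k)")
   apply simp
  apply arith
  done

definition gtest_c :: com where
  "gtest_c = Seq (Assign 42 (N 1)) (Seq (While (Less (N 0) (V 41)) gbody) (If (Less (N 0) (V 40)) (Assign 42 (N 0)) SKIP))"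

lemma gtest_step:
  assumes "t42 = (0::nat) \<or> t42 = 1"
    "A' = (if 2 ^ (2 * k + 1) \<le> A then (A - 2 ^ (2 * k + 1)) div 2 else A div 2)"
    "t42' = (if (if 2 ^ (2 * k + 1) \<le> A then even (A - 2 ^ (2 * k + 1)) else odd A) then t42 else 0)"
  shows "(t42' = 1 \<and> gtest k A') \<longleftrightarrow> (t42 = 1 \<and> gtest (Suc k) A)"
  using assms by (cases "2 ^ (2 * k + 1) \<le> A") auto

lemma gtest_spec: "wp gtest_c s (\<lambda>t. (t 42 = 0 \<or> t 42 = 1) \<and> (t 42 = 1 \<longleftrightarrow> gtest (s 41) (s 40)) \<and> (\<forall>i. i \<notin> Wg \<longrightarrow> t i = s i))"
  unfolding gtest_c_def
  apply (rule wp_seq, rule wp_assign, rule wp_seq)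
  apply (rule wp_while[where I = "\<lambda>t. (t 42 = 0 \<or> t 42 = 1) \<and> ((t 42 = 1 \<and> gtest (t 41) (t 40)) \<longleftrightarrow> gtest (s 41) (s 40)) \<and> (\<forall>i. i \<notin> Wg \<longrightarrow> t i = s i)"
        and f = "\<lambda>t. t 41"])
    apply (simp add: Wg_def)
  subgoal for t
  proof -
    assume I: "(t 42 = 0 \<or> t 42 = 1) \<and> ((t 42 = 1 \<and> gtest (t 41) (t 40)) \<longleftrightarrow> gtest (s 41) (s 40)) \<and> (\<forall>i. i \<notin> Wg \<longrightarrow> t i = s i)"
      and b: "bval (Less (N 0) (V 41)) t"
    then obtain k where k: "t 41 = Suc k" by (cases "t 41") auto
    show ?thesis
      apply (rule wp_mono[OF gbody_spec[of t k, OF k]])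
      using I k gtest_step[of "t 42"] by auto
  qed
  apply (rule wp_if)
   apply (rule wp_assign)
   apply (auto simp: Wg_def)[1]
  apply (rule wp_skip)
  apply (auto simp: Wg_def)
  done



definition anti_body :: com where
  "anti_body = Seq (Assign 20 (N 2)) (Seq (Assign 21 (Minus (Times (N 2) (V 52)) (N 1))) (Seq pow_c
     (Seq (If (Less (V 50) (V 22)) SKIP
        (Seq (Assign 40 (V 50)) (Seq (Assign 41 (V 52)) (Seq gtest_c (If (Less (N 0) (V 42)) (Assign 51 (N 1)) SKIP)))))
     (Assign 52 (Plus (V 52) (N 1))))))"

definition anti_c :: com where
  "anti_c = Seq (Assign 51 (N 0)) (Seq (Assign 52 (N 1)) (While (Less (V 52) (Plus (V 50) (N 1))) anti_body))"

definition Wa :: "nat set" where "Wa = {20, 21, 22, 23, 30, 32, 40, 41, 42, 43, 51, 52}"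

lemma anti_body_spec:
  "wp anti_body s (\<lambda>t. t 52 = s 52 + 1 \<and> t 50 = s 50 \<and>
     (0 < t 51 \<longleftrightarrow> (0 < s 51 \<or> (2 ^ (2 * s 52 - 1) \<le> s 50 \<and> gtest (s 52) (s 50)))) \<and>
     (\<forall>i. i \<notin> Wa \<longrightarrow> t i = s i))"
  unfolding anti_body_def
  apply (intro wp_seq wp_assign wp_if wp_skip wp_mono[OF pow_spec] wp_mono[OF gtest_spec])
  apply (auto simp: Wa_def Wg_def)
  done

lemma anti_spec: "wp anti_c s (\<lambda>t. (0 < t 51 \<longleftrightarrow> antipalindromic (s 50)) \<and> (\<forall>i. i \<notin> Wa \<longrightarrow> t i = s i))"
  unfolding anti_c_def
  apply (rule wp_seq, rule wp_assign, rule wp_seq, rule wp_assign)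
  apply (rule wp_while[where I = "\<lambda>t. t 50 = s 50 \<and> 1 \<le> t 52 \<and> t 52 \<le> s 50 + 1 \<and>
      (0 < t 51 \<longleftrightarrow> (\<exists>m. 1 \<le> m \<and> m < t 52 \<and> 2 ^ (2 * m - 1) \<le> s 50 \<and> gtest m (s 50))) \<and>
      (\<forall>i. i \<notin> Wa \<longrightarrow> t i = s i)"
        and f = "\<lambda>t. s 50 + 1 - t 52"])
    apply (simp add: Wa_def)
  subgoal for t
    apply (rule wp_mono[OF anti_body_spec])
    apply (auto simp: less_Suc_eq)
    done
  subgoal for t
    using anti_gtest[of "s 50"] by (auto simp: Suc_le_eq less_Suc_eq_le)
  done



definition Qp :: "nat \<Rightarrow> nat \<Rightarrow> nat \<Rightarrow> nat \<Rightarrow> bool" where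
  "Qp p q A B \<longleftrightarrow> q * A = p * B \<and> antipalindromic A \<and> antipalindromic B"

definition inner_body :: com where
  "inner_body = Seq (If (And (Not (Less (Times (V 11) (V 13)) (Times (V 10) (V 14)))) (Not (Less (Times (V 10) (V 14)) (Times (V 11) (V 13)))))
     (Seq (Assign 50 (V 13)) (Seq anti_c (Seq (Assign 15 (V 51)) (Seq (Assign 50 (V 14)) (Seq anti_c
        (If (And (Less (N 0) (V 15)) (Less (N 0) (V 51))) (Assign 0 (N 1)) SKIP)))))) SKIP)
     (Assign 14 (Plus (V 14) (N 1)))"

definition outer_body :: com where
  "outer_body = Seq (Assign 14 (N 1)) (Seq (While (Less (V 14) (Plus (V 12) (N 1))) inner_body) (Assign 13 (Plus (V 13) (N 1))))"

definition Ke :: aexp where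
  "Ke = Plus (Plus (Times (Plus (Plus (Times (N 4) (V 10)) (Times (N 4) (V 11))) (N 1)) (Plus (Plus (V 10) (V 11)) (N 1))) (Times (N 2) (V 10))) (Times (N 2) (V 11))"

definition main_c :: com where
  "main_c = Seq (Assign 10 (V 0)) (Seq (Assign 11 (V 1)) (Seq (Assign 20 (N 4)) (Seq (Assign 21 Ke) (Seq pow_c
     (Seq (Assign 12 (V 22)) (Seq (Assign 0 (N 0)) (Seq (Assign 13 (N 1)) (While (Less (V 13) (Plus (V 12) (N 1))) outer_body))))))))"

lemma inner_body_spec:
  assumes "s 0 = 0 \<or> s 0 = 1"
  shows "wp inner_body s (\<lambda>t. t 14 = s 14 + 1 \<and> t 10 = s 10 \<and> t 11 = s 11 \<and> t 12 = s 12 \<and> t 13 = s 13 \<and>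
     (t 0 = 0 \<or> t 0 = 1) \<and> (t 0 = 1 \<longleftrightarrow> (s 0 = 1 \<or> Qp (s 10) (s 11) (s 13) (s 14))))"
  unfolding inner_body_def
  apply (intro wp_seq wp_assign wp_if wp_skip wp_mono[OF anti_spec])
  using assms apply (auto simp: Wa_def Qp_def)
  done

lemma outer_body_spec:
  assumes "s 0 = 0 \<or> s 0 = 1"
  shows "wp outer_body s (\<lambda>t. t 13 = s 13 + 1 \<and> t 10 = s 10 \<and> t 11 = s 11 \<and> t 12 = s 12 \<and>
     (t 0 = 0 \<or> t 0 = 1) \<and> (t 0 = 1 \<longleftrightarrow> (s 0 = 1 \<or> (\<exists>B. 1 \<le> B \<and> B \<le> s 12 \<and> Qp (s 10) (s 11) (s 13) B))))"
  unfolding outer_body_def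
  apply (rule wp_seq, rule wp_assign, rule wp_seq)
  apply (rule wp_while[where I = "\<lambda>t. t 10 = s 10 \<and> t 11 = s 11 \<and> t 12 = s 12 \<and> t 13 = s 13 \<and>
      1 \<le> t 14 \<and> t 14 \<le> s 12 + 1 \<and> (t 0 = 0 \<or> t 0 = 1) \<and>
      (t 0 = 1 \<longleftrightarrow> (s 0 = 1 \<or> (\<exists>B. 1 \<le> B \<and> B < t 14 \<and> Qp (s 10) (s 11) (s 13) B)))"
        and f = "\<lambda>t. s 12 + 1 - t 14"])
    using assms apply simp
  subgoal for t
    apply (rule wp_mono[OF inner_body_spec])
     apply simp
    apply (auto simp: less_Suc_eq)
    done
  subgoal for t
    apply (rule wp_assign)
    apply (auto simp: less_Suc_eq_le)
    done
  done

lemma main_spec: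
  "wp main_c s (\<lambda>t. t 0 = 1 \<longleftrightarrow> (\<exists>A. 1 \<le> A \<and> A \<le> Mb (s 0) (s 1) \<and>
     (\<exists>B. 1 \<le> B \<and> B \<le> Mb (s 0) (s 1) \<and> s 1 * A = s 0 * B \<and> antipalindromic A \<and> antipalindromic B)))"
  unfolding main_c_def
  apply (rule wp_seq, rule wp_assign)+
  apply (rule wp_seq, rule wp_mono[OF pow_spec])
  apply (rule wp_seq, rule wp_assign)+
  subgoal for t
  apply (rule wp_while[where I = "\<lambda>u. u 10 = s 0 \<and> u 11 = s 1 \<and> u 12 = Mb (s 0) (s 1) \<and>
      1 \<le> u 13 \<and> u 13 \<le> Mb (s 0) (s 1) + 1 \<and> (u 0 = 0 \<or> u 0 = 1) \<and>
      (u 0 = 1 \<longleftrightarrow> (\<exists>A. 1 \<le> A \<and> A < u 13 \<and> (\<exists>B. 1 \<le> B \<and> B \<le> Mb (s 0) (s 1) \<and> Qp (s 0) (s 1) A B)))"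
        and f = "\<lambda>u. Mb (s 0) (s 1) + 1 - u 13"])
      apply (simp add: Mb_def Ke_def)
    subgoal for u
      apply (rule wp_mono[OF outer_body_spec])
       apply simp
      apply (auto simp: less_Suc_eq)
      done
    subgoal for u
      apply (auto simp: less_Suc_eq_le Qp_def)
      done
    done
  done

theorem theorem23:
  shows "\<exists>c::com. \<forall>p q::nat. p \<ge> 1 \<longrightarrow> q \<ge> 1 \<longrightarrow>
           (\<exists>t. big_step c (init2 p q) t \<and>
               (t 0 = 1 \<longleftrightarrow>
                 (\<exists>A B. antipalindromic A \<and> antipalindromic B \<and>
                    (of_nat p / of_nat q :: rat) = of_nat A / of_nat B)))"
proof (intro exI[of _ main_c] allI impI)
  fix p q :: nat
  assume p1: "p \<ge> 1" and q1: "q \<ge> 1"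
  have i0: "init2 p q 0 = p" and i1: "init2 p q 1 = q" by (simp_all add: init2_def)
  from main_spec[of "init2 p q"] obtain t where t: "big_step main_c (init2 p q) t"
    "t 0 = 1 \<longleftrightarrow> (\<exists>A. 1 \<le> A \<and> A \<le> Mb p q \<and>
     (\<exists>B. 1 \<le> B \<and> B \<le> Mb p q \<and> q * A = p * B \<and> antipalindromic A \<and> antipalindromic B))"
    unfolding wp_def i0 i1 by blast
  show "\<exists>t. big_step main_c (init2 p q) t \<and>
               (t 0 = 1 \<longleftrightarrow>
                 (\<exists>A B. antipalindromic A \<and> antipalindromic B \<and>
                    (of_nat p / of_nat q :: rat) = of_nat A / of_nat B))"
    using t char[OF p1 q1] by blast
qed

end
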